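(* Let $n\ge 2$ and $1\le i,j\le n$, and let $E_{ij}\in\{0,1\}^{n\times n}$ be the basis matrix with $(E_{ij})_{kl}=\delta_{ik}\delta_{jl}$. If $E_{ij}$ is decomposable, then $E_{ij}$ is maximal, i.e. for every compatible pair $(n_1,n_2)$ there exist $X\in\{0,1\}^{n_1\times n_1}$, $Y\in\{0,1\}^{n_2\times n_2}$ with $E_{ij}=X\otimes Y$.
   Context: Kronecker products of binary matrices use Boolean arithmetic ($1+1=1$). A matrix $A\in\{0,1\}^{n\times n}$ is decomposable if there exist $\ell>1$ and $A_i\in\{0,1\}^{n_i\times n_i}$ with $n_i>1$ such that $A=A_1\otimes\cdots\otimes A_\ell$. A compatible pair for $n$ is a pair $(n_1,n_2)$ of positive divisors of $n$, both different from $1$ and $n$, with $n_1n_2=n$. A decomposable matrix is maximal if it admits an $(n_1,n_2)$ factorization $A=A_1\otimes A_2$ ($A_i\in\{0,1\}^{n_i\times n_i}$) for every compatible pair $(n_1,n_2)$. *)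

theory Defs
  imports Main
begin

text \<open>A square binary matrix is represented as a pair (size, entries), where the
entries are a Boolean-valued function on 0-based indices; only entries with
both indices below the size are meaningful.\<close>

type_synonym bmat = "nat \<times> (nat \<Rightarrow> nat \<Rightarrow> bool)"

definition bmat_eq :: "bmat \<Rightarrow> bmat \<Rightarrow> bool" where
  "bmat_eq M N \<longleftrightarrow> fst M = fst N \<and>
     (\<forall>k < fst M. \<forall>l < fst M. snd M k l = snd N k l)"

text \<open>Kronecker product with Boolean arithmetic (each entry of the Kronecker
product is a single product of entries, so it is a conjunction).\<close>
definition kron :: "bmat \<Rightarrow> bmat \<Rightarrow> bmat" where
  "kron M N = (fst M * fst N,
     \<lambda>k l. snd M (k div fst N) (l div fst N) \<and> snd N (k mod fst N) (l mod fst N))"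

definition kron_list :: "bmat list \<Rightarrow> bmat" where
  "kron_list Ms = foldr kron Ms (1, \<lambda>_ _. True)"

definition decomposable :: "bmat \<Rightarrow> bool" where
  "decomposable A \<longleftrightarrow> (\<exists>Ms. length Ms > 1 \<and> (\<forall>M\<in>set Ms. fst M > 1) \<and>
       bmat_eq A (kron_list Ms))"

definition compatible_pair :: "nat \<Rightarrow> nat \<Rightarrow> nat \<Rightarrow> bool" where
  "compatible_pair n n1 n2 \<longleftrightarrow> n1 dvd n \<and> n2 dvd n \<and> n1 \<noteq> 1 \<and> n1 \<noteq> n \<and>
       n2 \<noteq> 1 \<and> n2 \<noteq> n \<and> n1 * n2 = n"

definition maximal :: "bmat \<Rightarrow> bool" where
  "maximal A \<longleftrightarrow> decomposable A \<and>
     (\<forall>n1 n2. compatible_pair (fst A) n1 n2 \<longrightarrow>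
        (\<exists>X Y. fst X = n1 \<and> fst Y = n2 \<and> bmat_eq A (kron X Y)))"

definition basis_mat :: "nat \<Rightarrow> nat \<Rightarrow> nat \<Rightarrow> bmat" where
  "basis_mat n i j = (n, \<lambda>k l. k = i \<and> l = j)"

end

theory Submission
  imports Defs
begin

lemma divmod_eq_iff:
  fixes k i m :: nat
  shows "(k div m = i div m \<and> k mod m = i mod m) \<longleftrightarrow> k = i"
  by (metis div_mult_mod_eq)

theorem lemma3:
  fixes n i j :: nat
  assumes "n \<ge> 2" and "i < n" and "j < n"
    and "decomposable (basis_mat n i j)"
  shows "maximal (basis_mat n i j)"
  unfolding maximal_def
proof (intro conjI allI impI)
  show "decomposable (basis_mat n i j)" by fact
next
  fix n1 n2 assume cp: "compatible_pair (fst (basis_mat n i j)) n1 n2"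
  hence e: "n1 * n2 = n" by (simp add: compatible_pair_def basis_mat_def)
  let ?X = "(n1, \<lambda>k l. k = i div n2 \<and> l = j div n2) :: bmat"
  let ?Y = "(n2, \<lambda>k l. k = i mod n2 \<and> l = j mod n2) :: bmat"
  have "bmat_eq (basis_mat n i j) (kron ?X ?Y)"
    unfolding bmat_eq_def kron_def basis_mat_def
    using e divmod_eq_iff[of _ n2 i] divmod_eq_iff[of _ n2 j] by auto
  thus "\<exists>X Y. fst X = n1 \<and> fst Y = n2 \<and> bmat_eq (basis_mat n i j) (kron X Y)"
    by (intro exI[of _ ?X] exI[of _ ?Y]) simp
qed

end
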